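(* Let $w=i_n\cdots i_1$ be a reverse lattice word and $\sigma=\mathrm{std}(w)$. Then the column reading word of $T_w$ equals $\sigma^{-1}$ (in one-line notation).
   Context: A word $w=i_n\cdots i_1$ of positive integers is reverse lattice if in every suffix $i_k\cdots i_1$ the number of $j$'s is at least the number of $(j+1)$'s for every $j\geq1$. $\mathrm{std}(w)$: replace the letters of $w$ (read left to right) by $1,\ldots,n$, smaller letters receiving smaller values, equal letters receiving increasing values from left to right; the result is a permutation in one-line notation. Partitions in French convention (rows numbered bottom to top). For a reverse lattice word, define partitions $\lambda_0=\varnothing$ and, for $k=1,\ldots,n$, $\lambda_k$ obtained from $\lambda_{k-1}$ by adding a box at its addable node in column $i_k$; $T_w$ is the standard reverse tableau of shape $\lambda_n$ in which the box of $\lambda_k$ not in $\lambda_{k-1}$ contains $n-k+1$. The column reading word of a tableau lists the entries of each column in increasing order, columns from left to right. *)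

theory Defs
  imports Main
begin

text \<open>A word w = i_n ... i_1 is represented by the list [i_n, ..., i_1]
  (read left to right), so the letter i_k is w ! (length w - k).\<close>

definition reverse_lattice :: "nat list \<Rightarrow> bool" where
  "reverse_lattice w \<longleftrightarrow> (\<forall>x\<in>set w. 1 \<le> x) \<and>
     (\<forall>k\<le>length w. \<forall>j\<ge>1. count_list (drop k w) (Suc j) \<le> count_list (drop k w) j)"

definition std :: "nat list \<Rightarrow> nat list" where
  "std w = map (\<lambda>p. Suc (card {q. q < length w \<and> (w ! q < w ! p \<or> (w ! q = w ! p \<and> q < p))}))
              [0..<length w]"

definition perm_inv :: "nat list \<Rightarrow> nat list" where
  "perm_inv s = map (\<lambda>r. Suc (THE q. q < length s \<and> s ! q = Suc r)) [0..<length s]"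

text \<open>Tableaux as partial maps from (row, column) (1-indexed, French convention,
  rows numbered bottom to top) to entries.\<close>
type_synonym tableau = "nat \<times> nat \<Rightarrow> nat option"

definition col_height :: "tableau \<Rightarrow> nat \<Rightarrow> nat" where
  "col_height T c = card {r. T (r, c) \<noteq> None}"

text \<open>add_boxes n k cs T: the letters cs = [i_k, i_(k+1), ...] are processed in turn;
  at step k a box is added at the addable node of column i_k (on top of that column),
  containing n - k + 1.\<close>
fun add_boxes :: "nat \<Rightarrow> nat \<Rightarrow> nat list \<Rightarrow> tableau \<Rightarrow> tableau" where
  "add_boxes n k [] T = T"
| "add_boxes n k (c # cs) T =
     add_boxes n (Suc k) cs (T((Suc (col_height T c), c) := Some (n - k + 1)))"

definition tableau_of :: "nat list \<Rightarrow> tableau" where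
  "tableau_of w = add_boxes (length w) 1 (rev w) (\<lambda>_. None)"

definition col_reading_word :: "tableau \<Rightarrow> nat list" where
  "col_reading_word T =
     concat (map (\<lambda>c. sorted_list_of_set {x. \<exists>r. T (r, c) = Some x})
                 (sorted_list_of_set {c. \<exists>r. T (r, c) \<noteq> None}))"

end

theory Submission
  imports Defs
begin

definition vals :: "tableau \<Rightarrow> nat \<Rightarrow> nat set" where
  "vals T c = {x. \<exists>r. T (r, c) = Some x}"

definition tinv :: "tableau \<Rightarrow> bool" where
  "tinv T \<longleftrightarrow> (\<forall>c. \<exists>m. {r. T (r, c) \<noteq> None} = {1..m})"

lemma add_boxes_props:
  assumes "tinv T"
  shows "tinv (add_boxes n k cs T) \<and>
    (\<forall>c. vals (add_boxes n k cs T) c = vals T c \<union> {n - (k+j) + 1 | j. j < length cs \<and> cs ! j = c})"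
  using assms
proof (induction cs arbitrary: k T)
  case Nil
  then show ?case by simp
next
  case (Cons c0 cs)
  obtain m where m: "{r. T (r, c0) \<noteq> None} = {1..m}" using Cons.prems tinv_def by blast
  have ch: "col_height T c0 = m" unfolding col_height_def m by simp
  have none: "T (Suc m, c0) = None"
  proof (rule ccontr)
    assume "T (Suc m, c0) \<noteq> None"
    then have "Suc m \<in> {r. T (r, c0) \<noteq> None}" by simp
    then show False unfolding m by simp
  qed
  define T' where "T' = T((Suc (col_height T c0), c0) := Some (n - k + 1))"
  have inv': "tinv T'"
    unfolding tinv_def
  proof
    fix c
    show "\<exists>m. {r. T' (r, c) \<noteq> None} = {1..m}"
    proof (cases "c = c0")
      case True
      have "{r. T' (r, c) \<noteq> None} = insert (Suc m) {r. T (r, c0) \<noteq> None}"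
        using True by (auto simp: T'_def ch)
      also have "\<dots> = {1..Suc m}" unfolding m by auto
      finally have "{r. T' (r, c) \<noteq> None} = {1..Suc m}" .
      then show ?thesis by blast
    next
      case False
      then show ?thesis using Cons.prems unfolding tinv_def T'_def by auto
    qed
  qed
  have v': "vals T' c = vals T c \<union> (if c = c0 then {n - k + 1} else {})" for c
  proof (rule set_eqI, rule iffI)
    fix x assume "x \<in> vals T' c"
    then obtain r where "T' (r, c) = Some x" by (auto simp: vals_def)
    then show "x \<in> vals T c \<union> (if c = c0 then {n - k + 1} else {})"
      by (auto simp: vals_def T'_def ch split: if_splits)
  next
    fix x assume x: "x \<in> vals T c \<union> (if c = c0 then {n - k + 1} else {})"
    show "x \<in> vals T' c"
    proof (cases "x \<in> vals T c")
      case True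
      then obtain r where r: "T (r, c) = Some x" by (auto simp: vals_def)
      have "(r, c) \<noteq> (Suc m, c0)"
      proof
        assume "(r, c) = (Suc m, c0)"
        then show False using r none by simp
      qed
      then have "T' (r, c) = T (r, c)" unfolding T'_def ch by auto
      then have "T' (r, c) = Some x" using r by simp
      then show ?thesis by (auto simp: vals_def)
    next
      case False
      then have "c = c0" "x = n - k + 1" using x by (auto split: if_splits)
      then have "T' (Suc m, c) = Some x" by (simp add: T'_def ch)
      then show ?thesis by (auto simp: vals_def)
    qed
  qed
  have IH: "tinv (add_boxes n (Suc k) cs T') \<and>
    (\<forall>c. vals (add_boxes n (Suc k) cs T') c = vals T' c \<union> {n - (Suc k+j) + 1 | j. j < length cs \<and> cs ! j = c})"
    using Cons.IH inv' by blast
  have eq: "(if c = c0 then {n - k + 1} else {}) \<union> {n - (Suc k+j) + 1 | j. j < length cs \<and> cs ! j = c}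
      = {n - (k+j) + 1 | j. j < length (c0#cs) \<and> (c0#cs) ! j = c}" for c
  proof (rule set_eqI, rule iffI)
    fix x assume "x \<in> (if c = c0 then {n - k + 1} else {}) \<union> {n - (Suc k+j) + 1 | j. j < length cs \<and> cs ! j = c}"
    then show "x \<in> {n - (k+j) + 1 | j. j < length (c0#cs) \<and> (c0#cs) ! j = c}"
    proof
      assume "x \<in> (if c = c0 then {n - k + 1} else {})"
      then show ?thesis by (auto split: if_splits intro!: exI[of _ 0])
    next
      assume "x \<in> {n - (Suc k+j) + 1 | j. j < length cs \<and> cs ! j = c}"
      then obtain j where "x = n - (Suc k+j) + 1" "j < length cs" "cs ! j = c" by blast
      then show ?thesis by (auto intro!: exI[of _ "Suc j"])
    qed
  next
    fix x assume "x \<in> {n - (k+j) + 1 | j. j < length (c0#cs) \<and> (c0#cs) ! j = c}"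
    then obtain j where j: "x = n - (k+j) + 1" "j < length (c0#cs)" "(c0#cs) ! j = c" by blast
    show "x \<in> (if c = c0 then {n - k + 1} else {}) \<union> {n - (Suc k+j) + 1 | j. j < length cs \<and> cs ! j = c}"
    proof (cases j)
      case 0 then show ?thesis using j by auto
    next
      case (Suc i) then show ?thesis using j by auto
    qed
  qed
  have "add_boxes n k (c0 # cs) T = add_boxes n (Suc k) cs T'" by (simp add: T'_def)
  then show ?case using IH v' eq by (simp only: Un_assoc) simp
qed

lemma vals_tableau_of:
  "vals (tableau_of w) c = Suc ` {p. p < length w \<and> w ! p = c}"
proof -
  have "tinv (\<lambda>_. None)" unfolding tinv_def by auto
  from add_boxes_props[OF this, of "length w" 1 "rev w"]
  have "vals (tableau_of w) c = {length w - (1+j) + 1 | j. j < length w \<and> rev w ! j = c}"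
    by (simp add: tableau_of_def vals_def)
  also have "\<dots> = Suc ` {p. p < length w \<and> w ! p = c}"
  proof (rule set_eqI, rule iffI)
    fix x assume "x \<in> {length w - (1+j) + 1 | j. j < length w \<and> rev w ! j = c}"
    then obtain j where "x = length w - (1+j) + 1" "j < length w" "rev w ! j = c" by blast
    then show "x \<in> Suc ` {p. p < length w \<and> w ! p = c}"
      by (auto simp: rev_nth intro!: image_eqI[of _ _ "length w - Suc j"])
  next
    fix x assume "x \<in> Suc ` {p. p < length w \<and> w ! p = c}"
    then obtain p where "x = Suc p" "p < length w" "w ! p = c" by blast
    then show "x \<in> {length w - (1+j) + 1 | j. j < length w \<and> rev w ! j = c}"
      by (auto simp: rev_nth intro!: exI[of _ "length w - Suc p"])
  qed
  finally show ?thesis .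
qed

lemma cols_tableau_of:
  "{c. \<exists>r. tableau_of w (r, c) \<noteq> None} = set w"
proof -
  have "{c. \<exists>r. tableau_of w (r, c) \<noteq> None} = {c. vals (tableau_of w) c \<noteq> {}}"
    by (auto simp: vals_def)
  also have "\<dots> = set w" by (auto simp: vals_tableau_of in_set_conv_nth)
  finally show ?thesis .
qed

lemma sorted_list_of_set_Suc:
  assumes "finite (A::nat set)"
  shows "sorted_list_of_set (Suc ` A) = map Suc (sorted_list_of_set A)"
proof -
  have "sorted_wrt (<) (map Suc (sorted_list_of_set A)) \<and> set (map Suc (sorted_list_of_set A)) = Suc ` A
        \<and> length (map Suc (sorted_list_of_set A)) = card (Suc ` A)"
    using assms by (simp add: sorted_wrt_map card_image strict_sorted_list_of_set)
  then show ?thesis using assms by (subst sorted_list_of_set_unique[symmetric]) auto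
qed

lemma sorted_wrt_concat_blocks:
  assumes "sorted_wrt (<) (cs::nat list)"
    and "\<And>c. c \<in> set cs \<Longrightarrow> sorted_wrt R (f c)"
    and "\<And>c c' x y. c < c' \<Longrightarrow> x \<in> set (f c) \<Longrightarrow> y \<in> set (f c') \<Longrightarrow> R x y"
  shows "sorted_wrt R (concat (map f cs))"
  using assms by (induction cs) (auto simp: sorted_wrt_append)

theorem lemma8p1:
  fixes w :: "nat list"
  assumes "reverse_lattice w"
  shows "col_reading_word (tableau_of w) = perm_inv (std w)"
proof -
  define n where "n = length w"
  define B where "B c = sorted_list_of_set {p. p < n \<and> w ! p = c}" for c
  define M where "M = concat (map B (sorted_list_of_set (set w)))"
  define R where "R p q \<longleftrightarrow> w ! p < w ! q \<or> (w ! p = w ! q \<and> p < q)" for p q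
  have fin: "finite {p. p < n \<and> w ! p = c}" for c by simp
  have cr: "col_reading_word (tableau_of w) = map Suc M"
    unfolding col_reading_word_def cols_tableau_of vals_tableau_of[unfolded vals_def] M_def B_def n_def
    by (simp add: sorted_list_of_set_Suc map_concat comp_def)
  have sortM: "sorted_wrt R M"
    unfolding M_def
  proof (rule sorted_wrt_concat_blocks)
    show "sorted_wrt (<) (sorted_list_of_set (set w))" by (rule strict_sorted_list_of_set)
    fix c assume "c \<in> set (sorted_list_of_set (set w))"
    have "sorted_wrt (<) (B c)" unfolding B_def by (rule strict_sorted_list_of_set)
    moreover have "\<forall>x \<in> set (B c). w ! x = c" unfolding B_def using fin by simp
    ultimately show "sorted_wrt R (B c)"
      by (rule_tac sorted_wrt_mono_rel[of _ "(<)"]) (auto simp: R_def)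
  next
    fix c c' x y assume "c < c'" "x \<in> set (B c)" "y \<in> set (B c')"
    then show "R x y" unfolding B_def R_def using fin by simp
  qed
  have setM: "set M = {..<n}"
    unfolding M_def B_def using fin by (auto simp: n_def in_set_conv_nth)
  have irr: "\<not> R p p" for p by (simp add: R_def)
  have asym: "R p q \<Longrightarrow> \<not> R q p" for p q by (auto simp: R_def)
  have distM: "distinct M"
    unfolding distinct_conv_nth
  proof (intro allI impI)
    fix i j assume "i < length M" "j < length M" "i \<noteq> j"
    then show "M ! i \<noteq> M ! j"
      using sorted_wrt_nth_less[OF sortM, of i j] sorted_wrt_nth_less[OF sortM, of j i] irr
      by (cases "i < j") auto
  qed
  have lenM: "length M = n" using distinct_card[OF distM] setM by simp
  have rank: "card {q. q < n \<and> R q (M ! r)} = r" if r: "r < n" for r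
  proof -
    have "{q. q < n \<and> R q (M ! r)} = set (take r M)"
    proof (rule set_eqI, rule iffI)
      fix q assume q: "q \<in> {q. q < n \<and> R q (M ! r)}"
      then have "q \<in> set M" using setM by auto
      then obtain i where i: "i < n" "M ! i = q" by (auto simp: in_set_conv_nth lenM)
      have "i < r"
      proof (rule ccontr)
        assume "\<not> i < r"
        then have "i = r \<or> r < i" by auto
        then show False
          using q i irr asym sorted_wrt_nth_less[OF sortM, of r i] lenM by auto
      qed
      then show "q \<in> set (take r M)" using i r lenM by (auto simp: in_set_conv_nth intro!: exI[of _ i])
    next
      fix q assume "q \<in> set (take r M)"
      then obtain i where i: "i < r" "q = M ! i" using r lenM by (auto simp: in_set_conv_nth)
      then have "R q (M ! r)" using sorted_wrt_nth_less[OF sortM, of i r] r lenM by auto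
      moreover have "q < n" using i r lenM setM nth_mem[of i M] by auto
      ultimately show "q \<in> {q. q < n \<and> R q (M ! r)}" by simp
    qed
    then show ?thesis using distinct_card[OF distinct_take[OF distM]] r lenM by simp
  qed
  have stdnth: "std w ! p = Suc (card {q. q < n \<and> R q p})" if "p < n" for p
    using that unfolding std_def R_def n_def by simp
  have lenstd: "length (std w) = n" by (simp add: std_def n_def)
  have ps: "perm_inv (std w) ! r = M ! r + 1" if r: "r < n" for r
  proof -
    have Mr: "M ! r < n" using r lenM setM nth_mem[of r M] by auto
    have "(THE q. q < length (std w) \<and> std w ! q = Suc r) = M ! r"
    proof (rule the_equality)
      show "M ! r < length (std w) \<and> std w ! (M ! r) = Suc r"
        using Mr lenstd stdnth rank r by simp
    next
      fix q assume q: "q < length (std w) \<and> std w ! q = Suc r"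
      then have "q \<in> set M" using setM lenstd by auto
      then obtain i where i: "i < n" "M ! i = q" by (auto simp: in_set_conv_nth lenM)
      have "Suc i = Suc r" using q stdnth[of q] rank[of i] i lenstd by simp
      then show "q = M ! r" using i by simp
    qed
    then show ?thesis unfolding perm_inv_def using r lenstd by simp
  qed
  show ?thesis
    unfolding cr
  proof (rule nth_equalityI)
    show "length (map Suc M) = length (perm_inv (std w))" using lenM lenstd by (simp add: perm_inv_def)
    fix r assume "r < length (map Suc M)"
    then show "map Suc M ! r = perm_inv (std w) ! r" using ps lenM by simp
  qed
qed
end
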